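(* Let $0\le j_2\le j_1$ be integers (so $(j_1,j_2,j_1-j_2)$ is admissible). Then $$\phi_{j_1,j_2,j_1-j_2}(x_{12},x_{13},1)=\sum_{a=0}^{j_2}\sum_{b=0}^{j_1-j_2}c_{a,b}\,(x_{12}+x_{12}^{-1})^{j_2-a}(x_{13}+x_{13}^{-1})^{j_1-j_2-b},$$ where $c_{a,b}=0$ if $a+b$ is odd, and if $a+b$ is even $$c_{a,b}=(-1)^{(a+b)/2}\binom{j_2}{a}\binom{j_1-j_2}{b}\frac{\left(j_1-\frac{a+b}{2}\right)!}{(j_1+1)!}\cdot\frac{(a+b)!}{\left(\frac{a+b}{2}\right)!}.$$
   Context: A triple $(j_1,j_2,j_3)$ of nonnegative integers is admissible if $|j_1-j_2|\le j_3\le j_1+j_2$ and $j_1+j_2+j_3$ is even; $\mathbf J$ denotes the set of admissible triples. Let $\mathcal H=\mathbb C[x_{12}+x_{12}^{-1},x_{13}+x_{13}^{-1},x_{23}+x_{23}^{-1}]\subset\mathbb C[x_{12}^{\pm1},x_{13}^{\pm1},x_{23}^{\pm1}]$. For $a,b\in\{\pm1\}$ set $K_{a,b}(j_1,j_2,j_3)=ab\,\frac{(aj_1+bj_2+j_3+a+b+2)(aj_1+bj_2-j_3+a+b)}{4(j_1+1)(j_2+1)}$. The genus two Schur polynomials $(\phi_{j_1,j_2,j_3})_{(j_1,j_2,j_3)\in\mathbf J}$ are the unique family in $\mathcal H$ with $\phi_{0,0,0}=1$ such that for all admissible $(j_1,j_2,j_3)$: $(x_{12}+x_{12}^{-1})\phi_{j_1,j_2,j_3}=\sum_{a,b\in\{\pm1\}}K_{a,b}(j_1,j_2,j_3)\phi_{j_1+a,j_2+b,j_3}$,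 $(x_{13}+x_{13}^{-1})\phi_{j_1,j_2,j_3}=\sum_{a,b\in\{\pm1\}}K_{a,b}(j_1,j_3,j_2)\phi_{j_1+a,j_2,j_3+b}$, $(x_{23}+x_{23}^{-1})\phi_{j_1,j_2,j_3}=\sum_{a,b\in\{\pm1\}}K_{a,b}(j_2,j_3,j_1)\phi_{j_1,j_2+a,j_3+b}$, where $\phi$ of a non-admissible triple is interpreted as $0$. *)

theory Defs
  imports Complex_Main
begin

text \<open>Admissible triples (indices are integers so that shifts by -1 make sense).\<close>
definition admissible :: "int \<Rightarrow> int \<Rightarrow> int \<Rightarrow> bool" where
  "admissible j1 j2 j3 \<longleftrightarrow> 0 \<le> j1 \<and> 0 \<le> j2 \<and> 0 \<le> j3 \<and>
     \<bar>j1 - j2\<bar> \<le> j3 \<and> j3 \<le> j1 + j2 \<and> even (j1 + j2 + j3)"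

definition Kc :: "int \<Rightarrow> int \<Rightarrow> int \<Rightarrow> int \<Rightarrow> int \<Rightarrow> complex" where
  "Kc a b j1 j2 j3 = of_int (a * b) *
     (of_int ((a*j1 + b*j2 + j3 + a + b + 2) * (a*j1 + b*j2 - j3 + a + b))
      / of_int (4 * (j1 + 1) * (j2 + 1)))"

definition phiA :: "(int \<Rightarrow> int \<Rightarrow> int \<Rightarrow> complex \<Rightarrow> complex \<Rightarrow> complex \<Rightarrow> complex)
     \<Rightarrow> int \<Rightarrow> int \<Rightarrow> int \<Rightarrow> complex \<Rightarrow> complex \<Rightarrow> complex \<Rightarrow> complex" where
  "phiA \<phi> j1 j2 j3 = (if admissible j1 j2 j3 then \<phi> j1 j2 j3 else (\<lambda>_ _ _. 0))"

text \<open>Membership in H = C[x12+1/x12, x13+1/x13, x23+1/x23], viewed as functions on (C*)^3.\<close>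
definition in_H :: "(complex \<Rightarrow> complex \<Rightarrow> complex \<Rightarrow> complex) \<Rightarrow> bool" where
  "in_H f \<longleftrightarrow> (\<exists>(c :: nat \<Rightarrow> nat \<Rightarrow> nat \<Rightarrow> complex) N. \<forall>x y z.
      x \<noteq> 0 \<longrightarrow> y \<noteq> 0 \<longrightarrow> z \<noteq> 0 \<longrightarrow>
      f x y z = (\<Sum>p\<le>N. \<Sum>q\<le>N. \<Sum>r\<le>N.
                   c p q r * (x + 1/x)^p * (y + 1/y)^q * (z + 1/z)^r))"

definition genus2_schur :: "(int \<Rightarrow> int \<Rightarrow> int \<Rightarrow> complex \<Rightarrow> complex \<Rightarrow> complex \<Rightarrow> complex) \<Rightarrow> bool" where
  "genus2_schur \<phi> \<longleftrightarrow>
     (\<forall>j1 j2 j3. admissible j1 j2 j3 \<longrightarrow> in_H (\<phi> j1 j2 j3)) \<and>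
     (\<forall>x y z. x \<noteq> 0 \<longrightarrow> y \<noteq> 0 \<longrightarrow> z \<noteq> 0 \<longrightarrow> \<phi> 0 0 0 x y z = 1) \<and>
     (\<forall>j1 j2 j3 x y z. admissible j1 j2 j3 \<longrightarrow> x \<noteq> 0 \<longrightarrow> y \<noteq> 0 \<longrightarrow> z \<noteq> 0 \<longrightarrow>
        (x + 1/x) * \<phi> j1 j2 j3 x y z =
          (\<Sum>a\<in>{-1,1}. \<Sum>b\<in>{-1,1}. Kc a b j1 j2 j3 * phiA \<phi> (j1+a) (j2+b) j3 x y z) \<and>
        (y + 1/y) * \<phi> j1 j2 j3 x y z =
          (\<Sum>a\<in>{-1,1}. \<Sum>b\<in>{-1,1}. Kc a b j1 j3 j2 * phiA \<phi> (j1+a) j2 (j3+b) x y z) \<and>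
        (z + 1/z) * \<phi> j1 j2 j3 x y z =
          (\<Sum>a\<in>{-1,1}. \<Sum>b\<in>{-1,1}. Kc a b j2 j3 j1 * phiA \<phi> j1 (j2+a) (j3+b) x y z))"

definition cab :: "nat \<Rightarrow> nat \<Rightarrow> nat \<Rightarrow> nat \<Rightarrow> complex" where
  "cab j1 j2 a b = (if odd (a + b) then 0 else
     (-1) ^ ((a + b) div 2) * of_nat (j2 choose a) * of_nat ((j1 - j2) choose b) *
     (of_nat (fact (j1 - (a + b) div 2)) / of_nat (fact (j1 + 1))) *
     (of_nat (fact (a + b)) / of_nat (fact ((a + b) div 2))))"

end

theory Submission
  imports Defs
begin


definition BX :: "(nat \<Rightarrow> nat \<Rightarrow> complex) \<Rightarrow> nat \<Rightarrow> nat \<Rightarrow> complex \<Rightarrow> complex \<Rightarrow> complex" where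
  "BX c M K X Y = (\<Sum>a=0..M. \<Sum>b=0..K. c a b * X^(M-a) * Y^(K-b))"

lemma shift1:
  fixes M p :: nat
  shows "(\<Sum>a=0..M. F a (M - a)) = (\<Sum>a=0..M+p. (if p \<le> a then F (a-p) (M+p-a) else (0::complex)))"
proof (induction p)
  case 0
  then show ?case by simp
next
  case (Suc p)
  have "(\<Sum>a=0..M+Suc p. (if Suc p \<le> a then F (a-Suc p) (M+Suc p-a) else (0::complex)))
      = (\<Sum>a=0..Suc (M+p). (if Suc p \<le> a then F (a-Suc p) (M+Suc p-a) else (0::complex)))" by simp
  also have "\<dots> = (\<Sum>a=0..M+p. (if p \<le> a then F (a-p) (M+p-a) else 0))"
    by (subst sum.atLeast0_atMost_Suc_shift) (auto intro!: sum.cong)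
  finally show ?case using Suc by simp
qed

lemma BX_alt: "BX c M K X Y = (\<Sum>a=0..M. (\<Sum>b=0..K. c a b * Y^(K-b)) * X^(M-a))"
  unfolding BX_def by (simp add: sum_distrib_left sum_distrib_right mult_ac)

lemma BX_shift:
  "BX c M K X Y = BX (\<lambda>a b. if p \<le> a \<and> q \<le> b then c (a-p) (b-q) else 0) (M+p) (K+q) X Y"
proof -
  have "BX c M K X Y = (\<Sum>a=0..M. (\<Sum>b=0..K+q. (if q \<le> b then c a (b-q) * Y^(K+q-b) else 0)) * X^(M-a))"
    unfolding BX_alt
    using shift1[where F="\<lambda>b e. c _ b * Y^e" and p=q and M=K] by simp
  also have "\<dots> = (\<Sum>a=0..M+p. if p \<le> a then (\<Sum>b=0..K+q. (if q \<le> b then c (a-p) (b-q) * Y^(K+q-b) else 0)) * X^(M+p-a) else 0)"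
    using shift1[where F="\<lambda>a e. (\<Sum>b=0..K+q. (if q \<le> b then c a (b-q) * Y^(K+q-b) else 0)) * X^e" and p=p and M=M] by simp
  also have "\<dots> = BX (\<lambda>a b. if p \<le> a \<and> q \<le> b then c (a-p) (b-q) else 0) (M+p) (K+q) X Y"
    unfolding BX_alt by (intro sum.cong refl) (auto intro!: sum.cong simp: sum_distrib_right)
  finally show ?thesis .
qed

definition D :: "nat \<Rightarrow> nat \<Rightarrow> nat \<Rightarrow> nat \<Rightarrow> complex" where
  "D m n a b = cab (m+n) m a b"

lemma cab_even:
  assumes "a + b = 2*k" "j2 \<le> j1"
  shows "cab j1 j2 a b = (-1)^k * of_nat (j2 choose a) * of_nat ((j1-j2) choose b) *
     (of_nat (fact (j1-k)) / of_nat (fact (j1+1))) * (of_nat (fact (2*k)) / of_nat (fact k))"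
  using assms unfolding cab_def by simp

lemma cab_odd: "odd (a+b) \<Longrightarrow> cab j1 j2 a b = 0"
  unfolding cab_def by simp

lemma binom_facts:
  fixes m a :: nat
  defines "A' \<equiv> (if a = 0 then 0 else of_nat (m choose (a-1)) :: complex)"
  shows "of_nat (Suc m choose a) = of_nat (m choose a) + A'"
    and "of_nat a * of_nat (Suc m choose a) = (of_nat m + 1) * A'"
proof -
  show "of_nat (Suc m choose a) = of_nat (m choose a) + A'"
    unfolding A'_def by (cases a) auto
  show "of_nat a * of_nat (Suc m choose a) = (of_nat m + 1) * A'"
  proof (cases a)
    case 0 then show ?thesis unfolding A'_def by simp
  next
    case (Suc a')
    have "Suc m * (m choose a') = (Suc m choose Suc a') * Suc a'" by (rule Suc_times_binomial_eq)
    then have "(of_nat (Suc m * (m choose a')) :: complex) = of_nat ((Suc m choose Suc a') * Suc a')" by metis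
    then show ?thesis unfolding A'_def using Suc by (simp add: algebra_simps)
  qed
qed

lemma ratio1:
  fixes F0 FN E Q K Nc s C1 B :: complex
  assumes "FN \<noteq> 0" "Q \<noteq> 0" "K \<noteq> 0" "Nc + 1 \<noteq> 0" "Nc + 2 \<noteq> 0"
  shows "- s * C1 * B * (((Nc+1-K)*F0)/((Nc+2)*(Nc+1)*FN)) * ((2*K*(2*K-1)*E)/(K*Q))
    = - s * (F0/FN*(E/Q)) * (C1 * B * (Nc+1-K) * 2 * (2*K-1)) / ((Nc+2)*(Nc+1))"
proof -
  have "(2*K*(2*K-1)*E)/(K*Q) = (K*(2*(2*K-1)*E))/(K*Q)" by (simp add: mult_ac)
  also have "\<dots> = (2*(2*K-1)*E)/Q" using assms by (rule_tac mult_divide_mult_cancel_left) auto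
  finally have eq: "(2*K*(2*K-1)*E)/(K*Q) = 2*(2*K-1)*(E/Q)" by simp
  show ?thesis unfolding eq by (simp only: divide_inverse inverse_mult_distrib ac_simps)
qed

lemma ratio2:
  fixes F0 FN E Q K Nc s A B :: complex
  assumes "FN \<noteq> 0" "Q \<noteq> 0" "K \<noteq> 0" "Nc + 1 \<noteq> 0"
  shows "- s * A * B * (F0/((Nc+1)*FN)) * ((2*K*(2*K-1)*E)/(K*Q))
    = - s * (F0/FN*(E/Q)) * (A * B * 2 * (2*K-1)) / (Nc+1)"
proof -
  have "(2*K*(2*K-1)*E)/(K*Q) = (K*(2*(2*K-1)*E))/(K*Q)" by (simp add: mult_ac)
  also have "\<dots> = (2*(2*K-1)*E)/Q" using assms by (rule_tac mult_divide_mult_cancel_left) auto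
  finally have eq: "(2*K*(2*K-1)*E)/(K*Q) = 2*(2*K-1)*(E/Q)" by simp
  show ?thesis unfolding eq by (simp only: divide_inverse inverse_mult_distrib ac_simps)
qed

lemma core_alg:
  fixes A A' B a b m n K :: complex
  assumes h: "a*(A+A') = (m+1)*A'" and hk: "2*K = a+b"
  shows "(A+A')*B*((m+n)+1-K)*2*(2*K-1) = ((m+n)+1)*A*B*2*(2*K-1) + ((m+n)+n+1)*(a-1)*A'*B
       + 2*n*(A'*b*B) - (A+A')*b*(b-1)*B"
proof -
  have e1: "(A+A')*B*((m+n)+1-K)*2*(2*K-1) = (A+A')*B*(2*(m+n)+2-(a+b))*((a+b)-1)"
    by (simp add: hk[symmetric] algebra_simps)
  have e2: "((m+n)+1)*A*B*2*(2*K-1) = ((m+n)+1)*A*B*2*((a+b)-1)" by (simp add: hk)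
  have e3: "(A+A')*B*(2*(m+n)+2-(a+b))*((a+b)-1) = ((m+n)+1)*A*B*2*((a+b)-1) + ((m+n)+n+1)*(a-1)*A'*B
       + 2*n*(A'*b*B) - (A+A')*b*(b-1)*B"
  proof -
    have "a*A = (m+1-a)*A'" using h by (simp add: algebra_simps)
    then have "B*(a+2*b-1)*(a*A) = B*(a+2*b-1)*((m+1-a)*A')" by simp
    then show ?thesis by (simp add: algebra_simps)
  qed
  show ?thesis unfolding e1 e2 by (rule e3)
qed

lemma coef_main:
  fixes m n a b k :: nat
  assumes ab: "a \<le> m+1" "b \<le> n" and k: "a + b = 2*k" "1 \<le> k"
  shows "of_nat ((m+n+2)*(m+n+1)) * D (m+1) n a b = of_nat ((m+n+1)^2) * D m n a b
     - of_nat (m*(m+n+n+1)) * (if 2 \<le> a then D (m-1) n (a-2) b else 0)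
     - 2 * of_nat n * (of_nat n * (if 1 \<le> a \<and> 1 \<le> b then D m (n-1) (a-1) (b-1) else 0))
     + of_nat (n*(n-1)) * (if 2 \<le> b then D (m+1) (n-2) a (b-2) else 0)"
proof -
  define N where "N = m + n"
  have kN: "k \<le> N" using ab k unfolding N_def by linarith
  define s :: complex where "s = (-1)^(k-1)"
  define R :: complex where "R = of_nat (fact (N-k)) / of_nat (fact N) * (of_nat (fact (2*k-2)) / of_nat (fact (k-1)))"
  define A :: complex where "A = of_nat (m choose a)"
  define A' :: complex where "A' = (if a = 0 then 0 else of_nat (m choose (a-1)))"
  define C1 :: complex where "C1 = of_nat (Suc m choose a)"
  define B :: complex where "B = of_nat (n choose b)"
  have sk: "(-1::complex)^k = - s" unfolding s_def using k by (cases k) auto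
  have e1: "fact (m+1+n-k) = (N+1-k) * (fact (N-k)::nat)"
  proof -
    have "m+1+n-k = Suc (N-k)" using kN unfolding N_def by linarith
    then show ?thesis using kN by (simp add: Suc_diff_le)
  qed
  have e2: "fact (m+1+n+1) = (N+2)*(N+1)*(fact N::nat)" unfolding N_def by (simp add: algebra_simps)
  have e3: "fact (2*k) = (2*k)*(2*k-1)*(fact (2*k-2)::nat)"
  proof -
    have "2*k = Suc (Suc (2*k-2))" using k by linarith
    then have "fact (2*k) = (fact (Suc (Suc (2*k-2))) :: nat)" by metis
    also have "\<dots> = Suc (Suc (2*k-2)) * Suc (2*k-2) * fact (2*k-2)" by (simp only: fact_Suc mult.assoc of_nat_id)
    also have "Suc (Suc (2*k-2)) = 2*k" using k by linarith
    also have "Suc (2*k-2) = 2*k-1" using k by linarith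
    finally show ?thesis .
  qed
  have e4: "fact k = k * (fact (k-1)::nat)"
  proof -
    have "k = Suc (k-1)" using k by linarith
    then have "fact k = (fact (Suc (k-1)) :: nat)" by metis
    also have "\<dots> = Suc (k-1) * fact (k-1)" by (simp only: fact_Suc of_nat_id)
    finally show ?thesis using k by simp
  qed
  have e5: "fact (m+n+1) = (N+1)*(fact N::nat)" unfolding N_def by simp
  have fNnz: "(of_nat (fact N) :: complex) \<noteq> 0" by simp
  have fqnz: "(of_nat (fact (k-1)) :: complex) \<noteq> 0" by simp
  have nz1: "(of_nat N :: complex) + 1 \<noteq> 0" "(of_nat N :: complex) + 2 \<noteq> 0"
    by (metis of_nat_Suc of_nat_eq_0_iff add.commute nat.distinct(1),
        metis of_nat_add of_nat_numeral of_nat_eq_0_iff add_is_0 zero_neq_numeral)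
  have h1: "D (m+1) n a b = - s * R * (C1 * B * (of_nat N + 1 - of_nat k) * 2 * (2 * of_nat k - 1)) / ((of_nat N + 2) * (of_nat N + 1))"
  proof -
    have "D (m+1) n a b = (-1)^k * C1 * B * (of_nat (fact (m+1+n-k)) / of_nat (fact (m+1+n+1))) * (of_nat (fact (2*k)) / of_nat (fact k))"
      unfolding D_def C1_def B_def by (subst cab_even[OF k(1)]) auto
    also have "\<dots> = - s * C1 * B * (of_nat ((N+1-k) * fact (N-k)) / of_nat ((N+2)*(N+1)*fact N)) * (of_nat ((2*k)*(2*k-1)*fact (2*k-2)) / of_nat (k * fact (k-1)))"
      by (simp only: e1 e2 e3 e4 sk)
    also have "\<dots> = - s * R * (C1 * B * (of_nat N + 1 - of_nat k) * 2 * (2 * of_nat k - 1)) / ((of_nat N + 2) * (of_nat N + 1))"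
    proof -
      have a1: "of_nat (N+1-k) = (of_nat N + 1 - of_nat k :: complex)" using kN by (simp add: of_nat_diff)
      have a2: "of_nat (2*k-1) = (2 * of_nat k - 1 :: complex)" using k by (simp add: of_nat_diff)
      have a3: "(of_nat k :: complex) \<noteq> 0" using k by simp
      show ?thesis unfolding R_def of_nat_mult a1 a2 of_nat_add of_nat_1 of_nat_numeral
        by (rule ratio1[OF fNnz fqnz a3 nz1])
    qed
    finally show ?thesis .
  qed
  have h2: "D m n a b = - s * R * (A * B * 2 * (2 * of_nat k - 1)) / (of_nat N + 1)"
  proof -
    have "D m n a b = (-1)^k * A * B * (of_nat (fact (N-k)) / of_nat (fact (m+n+1))) * (of_nat (fact (2*k)) / of_nat (fact k))"
      unfolding D_def A_def B_def N_def by (subst cab_even[OF k(1)]) auto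
    also have "\<dots> = - s * A * B * (of_nat (fact (N-k)) / of_nat ((N+1)*fact N)) * (of_nat ((2*k)*(2*k-1)*fact (2*k-2)) / of_nat (k * fact (k-1)))"
      by (simp only: e5 e3 e4 sk)
    also have "\<dots> = - s * R * (A * B * 2 * (2 * of_nat k - 1)) / (of_nat N + 1)"
    proof -
      have a2: "of_nat (2*k-1) = (2 * of_nat k - 1 :: complex)" using k by (simp add: of_nat_diff)
      have a3: "(of_nat k :: complex) \<noteq> 0" using k by simp
      show ?thesis unfolding R_def of_nat_mult a2 of_nat_add of_nat_1 of_nat_numeral
        by (rule ratio2[OF fNnz fqnz a3 nz1(1)])
    qed
    finally show ?thesis .
  qed
  have h3: "of_nat m * (if 2 \<le> a then D (m-1) n (a-2) b else 0) = s * R * (of_nat a - 1) * A' * B"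
  proof (cases "2 \<le> a \<and> 1 \<le> m")
    case True
    have k2: "a - 2 + b = 2 * (k-1)" using True k by linarith
    have "D (m-1) n (a-2) b = (-1)^(k-1) * of_nat ((m-1) choose (a-2)) * B * (of_nat (fact (m-1+n-(k-1))) / of_nat (fact (m-1+n+1))) * (of_nat (fact (2*(k-1))) / of_nat (fact (k-1)))"
      unfolding D_def B_def using True by (subst cab_even[OF k2]) auto
    also have "m-1+n-(k-1) = N-k" using True kN k unfolding N_def by linarith
    also have "m-1+n+1 = N" using True unfolding N_def by linarith
    also have "2*(k-1) = 2*k-2" by simp
    finally have d: "D (m-1) n (a-2) b = s * of_nat ((m-1) choose (a-2)) * B * R"
      unfolding s_def R_def by simp
    have "Suc (a-2) * (m choose Suc (a-2)) = m * ((m - 1) choose (a-2))" by (rule binomial_absorption)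
    moreover have "Suc (a-2) = a - 1" using True by linarith
    ultimately have "(a-1) * (m choose (a-1)) = m * ((m - 1) choose (a-2))" by simp
    then have "(of_nat ((a-1) * (m choose (a-1))) :: complex) = of_nat (m * ((m-1) choose (a-2)))" by metis
    then have "(of_nat a - 1) * A' = of_nat m * of_nat ((m - 1) choose (a-2))"
      unfolding A'_def using True by (simp add: of_nat_diff)
    then have eq: "of_nat m * of_nat ((m - 1) choose (a-2)) = (of_nat a - 1) * A'" by simp
    have "of_nat m * (if 2 \<le> a then D (m-1) n (a-2) b else 0) = s * R * B * (of_nat m * of_nat ((m - 1) choose (a-2)))"
      using True d by (simp add: algebra_simps)
    also have "\<dots> = s * R * B * ((of_nat a - 1) * A')" by (simp only: eq)
    finally show ?thesis by (simp add: algebra_simps)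
  next
    case False
    have "(of_nat a - 1) * A' = 0"
    proof (cases "2 \<le> a")
      case True
      then have "m = 0" using False by auto
      then show ?thesis using True by (simp add: A'_def)
    next
      case False
      then show ?thesis by (cases a) (auto simp: A'_def)
    qed
    then show ?thesis using False by auto
  qed
  have h4: "of_nat n * (if 1 \<le> a \<and> 1 \<le> b then D m (n-1) (a-1) (b-1) else 0) = s * R * A' * of_nat b * B"
  proof (cases "1 \<le> a \<and> 1 \<le> b")
    case True
    have k2: "a - 1 + (b - 1) = 2 * (k-1)" using True k by linarith
    have "D m (n-1) (a-1) (b-1) = (-1)^(k-1) * A' * of_nat ((n-1) choose (b-1)) * (of_nat (fact (m+(n-1)-(k-1))) / of_nat (fact (m+(n-1)+1))) * (of_nat (fact (2*(k-1))) / of_nat (fact (k-1)))"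
      unfolding D_def A'_def using True by (subst cab_even[OF k2]) auto
    also have "m+(n-1)-(k-1) = N-k" using True kN k ab unfolding N_def by linarith
    also have "m+(n-1)+1 = N" using True ab unfolding N_def by linarith
    also have "2*(k-1) = 2*k-2" by simp
    finally have d: "D m (n-1) (a-1) (b-1) = s * A' * of_nat ((n-1) choose (b-1)) * R"
      unfolding s_def R_def by simp
    have "Suc (b-1) * (n choose Suc (b-1)) = n * ((n - 1) choose (b-1))" by (rule binomial_absorption)
    moreover have "Suc (b-1) = b" using True by linarith
    ultimately have "b * (n choose b) = n * ((n - 1) choose (b-1))" by simp
    then have "of_nat b * B = of_nat n * (of_nat ((n - 1) choose (b-1)) :: complex)"
      unfolding B_def by (simp flip: of_nat_mult)
    then have eq: "of_nat n * (of_nat ((n - 1) choose (b-1)) :: complex) = of_nat b * B" by simp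
    have "of_nat n * (if 1 \<le> a \<and> 1 \<le> b then D m (n-1) (a-1) (b-1) else 0) = s * R * A' * (of_nat n * of_nat ((n - 1) choose (b-1)))"
      using True d by (simp add: algebra_simps)
    also have "\<dots> = s * R * A' * (of_nat b * B)" by (simp only: eq)
    finally show ?thesis by (simp add: algebra_simps)
  next
    case False
    then show ?thesis by (auto simp: A'_def)
  qed
  have h5: "of_nat (n*(n-1)) * (if 2 \<le> b then D (m+1) (n-2) a (b-2) else 0) = s * R * C1 * of_nat b * (of_nat b - 1) * B"
  proof (cases "2 \<le> b")
    case True
    have k2: "a + (b - 2) = 2 * (k-1)" using True k by linarith
    have "D (m+1) (n-2) a (b-2) = (-1)^(k-1) * C1 * of_nat ((n-2) choose (b-2)) * (of_nat (fact (m+1+(n-2)-(k-1))) / of_nat (fact (m+1+(n-2)+1))) * (of_nat (fact (2*(k-1))) / of_nat (fact (k-1)))"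
      unfolding D_def C1_def using True ab by (subst cab_even[OF k2]) auto
    also have "m+1+(n-2)-(k-1) = N-k" using True kN k ab unfolding N_def by linarith
    also have "m+1+(n-2)+1 = N" using True ab unfolding N_def by linarith
    also have "2*(k-1) = 2*k-2" by simp
    finally have d: "D (m+1) (n-2) a (b-2) = s * C1 * of_nat ((n-2) choose (b-2)) * R"
      unfolding s_def R_def by simp
    have "Suc (b-1) * (n choose Suc (b-1)) = n * ((n - 1) choose (b-1))" by (rule binomial_absorption)
    moreover have "Suc (b-2) * ((n-1) choose Suc (b-2)) = (n-1) * ((n - 1 - 1) choose (b-2))" by (rule binomial_absorption)
    moreover have "Suc (b-1) = b" "Suc (b-2) = b - 1" "n - 1 - 1 = n - 2" using True by linarith+
    ultimately have "b * (b-1) * (n choose b) = n * (n-1) * ((n - 2) choose (b-2))"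
      by (metis mult.assoc mult.left_commute)
    then have "(of_nat (b * (b-1) * (n choose b)) :: complex) = of_nat (n * (n-1) * ((n - 2) choose (b-2)))" by metis
    then have "of_nat b * (of_nat b - 1) * B = of_nat (n * (n-1)) * (of_nat ((n - 2) choose (b-2)) :: complex)"
      unfolding B_def using True by (simp add: of_nat_diff)
    then have eq: "of_nat (n * (n-1)) * (of_nat ((n - 2) choose (b-2)) :: complex) = of_nat b * (of_nat b - 1) * B" by simp
    have "of_nat (n*(n-1)) * (if 2 \<le> b then D (m+1) (n-2) a (b-2) else 0) = s * R * C1 * (of_nat (n * (n-1)) * of_nat ((n - 2) choose (b-2)))"
      using True d by (simp only: if_True mult_ac)
    also have "\<dots> = s * R * C1 * (of_nat b * (of_nat b - 1) * B)" by (simp only: eq)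
    finally show ?thesis by (simp add: algebra_simps)
  next
    case False
    then have "of_nat b * (of_nat b - 1) = (0::complex)" by (cases b) auto
    then show ?thesis using False by auto
  qed
  have p1: "C1 = A + A'" and p2: "of_nat a * C1 = (of_nat m + 1) * A'"
    using binom_facts[where m=m and a=a] unfolding C1_def A_def A'_def by auto
  have kk: "2 * of_nat k = (of_nat a + of_nat b :: complex)"
    using k(1) by (metis of_nat_add of_nat_mult of_nat_numeral)
  have Nc: "(of_nat N :: complex) = of_nat m + of_nat n" unfolding N_def by simp
  have core: "C1 * B * (of_nat N + 1 - of_nat k) * 2 * (2 * of_nat k - 1)
     = (of_nat N + 1) * A * B * 2 * (2 * of_nat k - 1) + (of_nat N + of_nat n + 1) * (of_nat a - 1) * A' * B
       + 2 * of_nat n * (A' * of_nat b * B) - C1 * of_nat b * (of_nat b - 1) * B"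
    using core_alg[where A=A and A'=A' and B=B and a="of_nat a" and b="of_nat b" and m="of_nat m" and n="of_nat n" and K="of_nat k"]
      p1 p2 kk unfolding Nc by (simp add: add.commute)
  have L: "of_nat ((m+n+2)*(m+n+1)) * D (m+1) n a b = - s * R * (C1 * B * (of_nat N + 1 - of_nat k) * 2 * (2 * of_nat k - 1))"
  proof -
    have "(of_nat ((m+n+2)*(m+n+1)) :: complex) = (of_nat N + 2) * (of_nat N + 1)" unfolding N_def by (simp add: algebra_simps)
    then show ?thesis unfolding h1 using nz1 by simp
  qed
  have c2: "of_nat ((m+n+1)^2) * D m n a b = (of_nat N + 1) * (- s * R * (A * B * 2 * (2 * of_nat k - 1)))"
  proof -
    have "(of_nat ((m+n+1)^2) :: complex) = (of_nat N + 1) * (of_nat N + 1)" unfolding N_def by (simp add: power2_eq_square algebra_simps)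
    then show ?thesis unfolding h2 using nz1 by simp
  qed
  have r3: "of_nat (m*(m+n+n+1)) * (if 2 \<le> a then D (m-1) n (a-2) b else 0) = (of_nat N + of_nat n + 1) * (s * R * (of_nat a - 1) * A' * B)"
  proof -
    have "of_nat (m*(m+n+n+1)) * (if 2 \<le> a then D (m-1) n (a-2) b else 0) = of_nat (m+n+n+1) * (of_nat m * (if 2 \<le> a then D (m-1) n (a-2) b else 0))"
      by (simp only: of_nat_mult mult_ac)
    then show ?thesis unfolding h3 N_def by simp
  qed
  have Rr: "of_nat ((m+n+1)^2) * D m n a b
     - of_nat (m*(m+n+n+1)) * (if 2 \<le> a then D (m-1) n (a-2) b else 0)
     - 2 * of_nat n * (of_nat n * (if 1 \<le> a \<and> 1 \<le> b then D m (n-1) (a-1) (b-1) else 0))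
     + of_nat (n*(n-1)) * (if 2 \<le> b then D (m+1) (n-2) a (b-2) else 0)
     = - s * R * ((of_nat N + 1) * A * B * 2 * (2 * of_nat k - 1) + (of_nat N + of_nat n + 1) * (of_nat a - 1) * A' * B
       + 2 * of_nat n * (A' * of_nat b * B) - C1 * of_nat b * (of_nat b - 1) * B)"
    unfolding r3 h4 h5 c2 by (simp add: algebra_simps)
  show ?thesis unfolding L Rr core ..
qed

lemma cab_zero_a: "j2 < a \<Longrightarrow> cab j1 j2 a b = 0"
  unfolding cab_def by (simp add: binomial_eq_0)

lemma cab_zero_b: "j1 - j2 < b \<Longrightarrow> cab j1 j2 a b = 0"
  unfolding cab_def by (simp add: binomial_eq_0)

lemma divc: "x \<noteq> 0 \<Longrightarrow> (x::complex) / (c * x) = 1 / c"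
  by (cases "c = 0") (simp_all add: field_simps)

lemma divc2: "x \<noteq> 0 \<Longrightarrow> c = d \<Longrightarrow> (x::complex) / (c * x) = 1 / d"
  using divc by simp

lemma coef_id:
  fixes m n a b :: nat
  assumes ab: "a \<le> m+1" "b \<le> n"
  shows "of_nat ((m+n+2)*(m+n+1)) * D (m+1) n a b = of_nat ((m+n+1)^2) * D m n a b
     - of_nat (m*(m+n+n+1)) * (if 2 \<le> a then D (m-1) n (a-2) b else 0)
     - 2 * of_nat n * (of_nat n * (if 1 \<le> a \<and> 1 \<le> b then D m (n-1) (a-1) (b-1) else 0))
     + of_nat (n*(n-1)) * (if 2 \<le> b then D (m+1) (n-2) a (b-2) else 0)"
proof (cases "odd (a+b)")
  case True
  have o1: "2 \<le> a \<Longrightarrow> odd (a - 2 + b)" using True by (simp add: odd_add even_diff_nat)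
  have o2: "1 \<le> a \<Longrightarrow> 1 \<le> b \<Longrightarrow> odd (a - 1 + (b - 1))" using True
    by (metis (no_types, lifting) add.commute add_diff_assoc2 diff_diff_left le_add2 le_add_diff_inverse odd_add odd_one one_add_one even_diff_nat)
  have o3: "2 \<le> b \<Longrightarrow> odd (a + (b - 2))" using True by (simp add: odd_add even_diff_nat)
  have z1: "(if 2 \<le> a then D (m-1) n (a-2) b else 0) = 0"
    using o1 unfolding D_def by (auto intro: cab_odd)
  have z2: "(if 1 \<le> a \<and> 1 \<le> b then D m (n-1) (a-1) (b-1) else 0) = 0"
    using o2 unfolding D_def by (auto intro: cab_odd)
  have z3: "(if 2 \<le> b then D (m+1) (n-2) a (b-2) else 0) = 0"
    using o3 unfolding D_def by (auto intro: cab_odd)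
  have "D (m+1) n a b = 0" "D m n a b = 0" using True unfolding D_def by (auto intro: cab_odd)
  then show ?thesis unfolding z1 z2 z3 by simp
next
  case False
  then obtain k where k: "a + b = 2*k" by (metis evenE)
  show ?thesis
  proof (cases "k = 0")
    case True
    then have "a = 0" "b = 0" using k by auto
    have d1: "D (m+1) n 0 0 = 1 / (of_nat (m+n) + 2)"
    proof -
      have "D (m+1) n 0 0 = fact (Suc (m+n)) / fact (Suc (Suc (m+n)))" unfolding D_def cab_def by (simp del: fact_Suc)
      also have "\<dots> = 1 / (of_nat (m+n) + 2)" 
        by (simp only: fact_Suc[of "Suc (m+n)"]) (rule divc2, rule fact_nonzero, simp add: algebra_simps)
      finally show ?thesis .
    qed
    have d2: "D m n 0 0 = 1 / (of_nat (m+n) + 1)"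
    proof -
      have "D m n 0 0 = fact (m+n) / fact (Suc (m+n))" unfolding D_def cab_def by (simp del: fact_Suc)
      also have "\<dots> = 1 / (of_nat (m+n) + 1)" 
        by (simp only: fact_Suc[of "(m+n)"]) (rule divc2, rule fact_nonzero, simp add: algebra_simps)
      finally show ?thesis .
    qed
    have nz: "(of_nat (m+n) :: complex) + 1 \<noteq> 0" "(of_nat (m+n) :: complex) + 2 \<noteq> 0"
      by (metis of_nat_Suc of_nat_eq_0_iff add.commute nat.distinct(1),
        metis of_nat_add of_nat_numeral of_nat_eq_0_iff add_is_0 zero_neq_numeral)
    have "(of_nat ((m+n+2)*(m+n+1)) :: complex) * (1 / (of_nat (m+n) + 2)) = of_nat (m+n) + 1"
      using nz by (simp add: field_simps)
    moreover have "(of_nat ((m+n+1)^2) :: complex) * (1 / (of_nat (m+n) + 1)) = of_nat (m+n) + 1"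
      using nz by (simp add: field_simps power2_eq_square)
    ultimately show ?thesis using \<open>a = 0\<close> \<open>b = 0\<close> d1 d2 by simp
  next
    case False
    then show ?thesis using coef_main[OF ab k] by simp
  qed
qed

lemma BX_cong: "(\<And>a b. a \<le> M \<Longrightarrow> b \<le> K \<Longrightarrow> c a b = c' a b) \<Longrightarrow> BX c M K X Y = BX c' M K X Y"
  unfolding BX_def by (intro sum.cong refl) auto

lemma BX_shift_a:
  "BX c M K X Y = BX (\<lambda>a b. if p \<le> a then c (a-p) b else 0) (M+p) K X Y"
proof -
  have "BX c M K X Y = BX (\<lambda>a b. if p \<le> a \<and> 0 \<le> b then c (a-p) (b-0) else 0) (M+p) (K+0) X Y"
    by (rule BX_shift)
  also have "\<dots> = BX (\<lambda>a b. if p \<le> a then c (a-p) b else 0) (M+p) K X Y"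
    by (simp only: add_0_right) (rule BX_cong, auto)
  finally show ?thesis .
qed

lemma BX_shift_b:
  "BX c M K X Y = BX (\<lambda>a b. if q \<le> b then c a (b-q) else 0) M (K+q) X Y"
proof -
  have "BX c M K X Y = BX (\<lambda>a b. if 0 \<le> a \<and> q \<le> b then c (a-0) (b-q) else 0) (M+0) (K+q) X Y"
    by (rule BX_shift)
  also have "\<dots> = BX (\<lambda>a b. if q \<le> b then c a (b-q) else 0) M (K+q) X Y"
    by (simp only: add_0_right) (rule BX_cong, auto)
  finally show ?thesis .
qed

definition GG :: "nat \<Rightarrow> nat \<Rightarrow> complex \<Rightarrow> complex \<Rightarrow> complex" where
  "GG m n X Y = BX (D m n) m n X Y"

lemma BX_zero: "BX (\<lambda>a b. 0) M K X Y = 0"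
  unfolding BX_def by simp

lemma BX_add: "BX (\<lambda>a b. c1 a b + c2 a b) M K X Y = BX c1 M K X Y + BX c2 M K X Y"
  unfolding BX_def by (simp add: sum.distrib algebra_simps)

lemma BX_diff: "BX (\<lambda>a b. c1 a b - c2 a b) M K X Y = BX c1 M K X Y - BX c2 M K X Y"
  unfolding BX_def by (simp add: sum_subtractf algebra_simps)

lemma BX_cmult: "BX (\<lambda>a b. \<alpha> * c a b) M K X Y = \<alpha> * BX c M K X Y"
  unfolding BX_def by (simp add: sum_distrib_left algebra_simps)

lemma T2: "X * GG m n X Y = BX (D m n) (m+1) n X Y"
proof -
  have z: "(\<Sum>b=0..n. D m n (Suc m) b * X^(Suc m - Suc m) * Y^(n-b)) = 0"
    unfolding D_def by (simp add: cab_zero_a)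
  have "BX (D m n) (m+1) n X Y = (\<Sum>a=0..m. \<Sum>b=0..n. D m n a b * X^(Suc m-a) * Y^(n-b))"
    unfolding BX_def using z by simp
  also have "\<dots> = (\<Sum>a=0..m. \<Sum>b=0..n. X * (D m n a b * X^(m-a) * Y^(n-b)))"
    by (intro sum.cong refl) (simp add: Suc_diff_le algebra_simps)
  also have "\<dots> = X * GG m n X Y"
    unfolding GG_def BX_def by (simp add: sum_distrib_left)
  finally show ?thesis by simp
qed

lemma T3: "of_nat m * GG (m-1) n X Y = BX (\<lambda>a b. of_nat m * (if 2 \<le> a then D (m-1) n (a-2) b else 0)) (m+1) n X Y"
proof (cases "m = 0")
  case True
  then show ?thesis by (simp add: BX_zero)
next
  case False
  have "GG (m-1) n X Y = BX (\<lambda>a b. if 2 \<le> a then D (m-1) n (a-2) b else 0) (m-1+2) n X Y"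
    unfolding GG_def by (rule BX_shift_a)
  also have "m-1+2 = m+1" using False by simp
  finally show ?thesis by (simp add: BX_cmult[symmetric])
qed

lemma T4: "of_nat n * GG m (n-1) X Y = BX (\<lambda>a b. of_nat n * (if 1 \<le> a \<and> 1 \<le> b then D m (n-1) (a-1) (b-1) else 0)) (m+1) n X Y"
proof (cases "n = 0")
  case True
  then show ?thesis by (simp add: BX_zero)
next
  case False
  have "GG m (n-1) X Y = BX (\<lambda>a b. if 1 \<le> a \<and> 1 \<le> b then D m (n-1) (a-1) (b-1) else 0) (m+1) (n-1+1) X Y"
    unfolding GG_def by (rule BX_shift)
  also have "n-1+1 = n" using False by simp
  finally show ?thesis by (simp add: BX_cmult[symmetric])
qed

lemma T5: "of_nat (n*(n-1)) * GG (m+1) (n-2) X Y = BX (\<lambda>a b. of_nat (n*(n-1)) * (if 2 \<le> b then D (m+1) (n-2) a (b-2) else 0)) (m+1) n X Y"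
proof (cases "n < 2")
  case True
  then have "n*(n-1) = 0" by (cases n) auto
  then have z: "(of_nat (n*(n-1)) :: complex) = 0" by simp
  show ?thesis unfolding z by (simp add: BX_zero)
next
  case False
  have "GG (m+1) (n-2) X Y = BX (\<lambda>a b. if 2 \<le> b then D (m+1) (n-2) a (b-2) else 0) (m+1) (n-2+2) X Y"
    unfolding GG_def by (rule BX_shift_b)
  also have "n-2+2 = n" using False by simp
  finally show ?thesis by (simp add: BX_cmult[symmetric])
qed

lemma G_rec:
  "of_nat ((m+n+2)*(m+n+1)) * GG (m+1) n X Y = of_nat ((m+n+1)^2) * (X * GG m n X Y)
     - of_nat (m+n+n+1) * (of_nat m * GG (m-1) n X Y)
     - 2 * of_nat n * (of_nat n * GG m (n-1) X Y)
     + of_nat (n*(n-1)) * GG (m+1) (n-2) X Y"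
proof -
  have "of_nat ((m+n+2)*(m+n+1)) * GG (m+1) n X Y = BX (\<lambda>a b. of_nat ((m+n+2)*(m+n+1)) * D (m+1) n a b) (m+1) n X Y"
    unfolding GG_def BX_cmult by simp
  also have "\<dots> = BX (\<lambda>a b. of_nat ((m+n+1)^2) * D m n a b
     - of_nat (m+n+n+1) * (of_nat m * (if 2 \<le> a then D (m-1) n (a-2) b else 0))
     - 2 * of_nat n * (of_nat n * (if 1 \<le> a \<and> 1 \<le> b then D m (n-1) (a-1) (b-1) else 0))
     + of_nat (n*(n-1)) * (if 2 \<le> b then D (m+1) (n-2) a (b-2) else 0)) (m+1) n X Y"
  proof (rule BX_cong)
    fix a b assume "a \<le> m+1" "b \<le> n"
    from coef_id[OF this] show "of_nat ((m+n+2)*(m+n+1)) * D (m+1) n a b = of_nat ((m+n+1)^2) * D m n a b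
     - of_nat (m+n+n+1) * (of_nat m * (if 2 \<le> a then D (m-1) n (a-2) b else 0))
     - 2 * of_nat n * (of_nat n * (if 1 \<le> a \<and> 1 \<le> b then D m (n-1) (a-1) (b-1) else 0))
     + of_nat (n*(n-1)) * (if 2 \<le> b then D (m+1) (n-2) a (b-2) else 0)"
      by (simp only: of_nat_mult mult_ac)
  qed
  also have "\<dots> = of_nat ((m+n+1)^2) * (X * GG m n X Y)
     - of_nat (m+n+n+1) * (of_nat m * GG (m-1) n X Y)
     - 2 * of_nat n * (of_nat n * GG m (n-1) X Y)
     + of_nat (n*(n-1)) * GG (m+1) (n-2) X Y"
    unfolding T2 T3 T4 T5 BX_add BX_diff BX_cmult by (simp add: mult.assoc)
  finally show ?thesis .
qed

lemma GG_sym: "GG m n X Y = GG n m Y X"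
proof -
  have "GG n m Y X = (\<Sum>a=0..n. \<Sum>b=0..m. cab (n+m) n a b * Y^(n-a) * X^(m-b))"
    unfolding GG_def BX_def D_def by simp
  also have "\<dots> = (\<Sum>b=0..m. \<Sum>a=0..n. cab (n+m) n a b * Y^(n-a) * X^(m-b))"
    by (rule sum.swap)
  also have "\<dots> = (\<Sum>b=0..m. \<Sum>a=0..n. cab (m+n) m b a * X^(m-b) * Y^(n-a))"
    by (intro sum.cong refl) (simp add: cab_def add.commute mult_ac)
  also have "\<dots> = GG m n X Y" unfolding GG_def BX_def D_def by simp
  finally show ?thesis by simp
qed

lemma G_rec0:
  "of_nat ((n+2)*(n+1)) * GG 0 (n+1) X Y = of_nat ((n+1)^2) * (Y * GG 0 n X Y)
     - of_nat (n+1) * (of_nat n * GG 0 (n-1) X Y)"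
  using G_rec[of n 0 Y X] by (simp add: GG_sym[of 0])

lemma GG_00: "GG 0 0 X Y = 1"
  unfolding GG_def BX_def D_def cab_def by simp

lemma sum_pm: "(\<Sum>a\<in>{-1,1::int}. g a) = g (-1) + g 1"
  by simp

lemma adm_face: "admissible (int (m+n)) (int m) (int n)"
  unfolding admissible_def by simp



lemma nz_c1: "(of_nat k :: complex) + 1 \<noteq> 0"
proof -
  have "(of_nat k :: complex) + 1 = of_nat (Suc k)" by simp
  also have "\<dots> \<noteq> 0" by (simp only: of_nat_eq_0_iff)
  finally show ?thesis .
qed

lemma nz_c2: "(of_nat k :: complex) + 2 \<noteq> 0"
proof -
  have "(of_nat k :: complex) + 2 = of_nat (Suc (Suc k))" by simp
  also have "\<dots> \<noteq> 0" by (simp only: of_nat_eq_0_iff)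
  finally show ?thesis .
qed

lemma nz_c3: "1 + (of_nat k :: complex) \<noteq> 0" "2 + (of_nat k :: complex) \<noteq> 0"
  using nz_c1[of k] nz_c2[of k] by (simp_all add: add.commute)

lemmas nz_c = nz_c1 nz_c2 nz_c3

lemma frac4: "(Q::int) \<noteq> 0 \<Longrightarrow> R \<noteq> 0 \<Longrightarrow> of_int (4*P*Q) / of_int (4*R*Q) = (of_int P / of_int R :: complex)"
  by (simp add: field_simps)

lemma K12_11: "Kc 1 1 (int (m+n)) (int m) (int n) = (of_nat (m+n) + 2) / (of_nat (m+n) + 1)"
proof -
  have "Kc 1 1 (int (m+n)) (int m) (int n) = of_int (4*(int (m+n)+2)*(int m+1)) / of_int (4*(int (m+n)+1)*(int m+1))"
    unfolding Kc_def by (simp add: algebra_simps)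
  also have "\<dots> = of_int (int (m+n)+2) / of_int (int (m+n)+1)"
    by (rule frac4) auto
  also have "\<dots> = (of_nat (m+n) + 2) / (of_nat (m+n) + 1)" by simp
  finally show ?thesis .
qed

lemma K12_mm: "Kc (-1) (-1) (int (m+n)) (int m) (int n) = of_nat m / (of_nat m + 1)"
proof -
  have "Kc (-1) (-1) (int (m+n)) (int m) (int n) = of_int (4*(int m)*(int (m+n)+1)) / of_int (4*(int m+1)*(int (m+n)+1))"
    unfolding Kc_def by (simp add: algebra_simps)
  also have "\<dots> = of_int (int m) / of_int (int m+1)"
    by (rule frac4) auto
  also have "\<dots> = of_nat m / (of_nat m + 1)" by simp
  finally show ?thesis .
qed

lemma K12_m1: "Kc (-1) 1 (int (m+n)) (int m) (int n) = of_nat n / ((of_nat (m+n) + 1) * (of_nat m + 1))"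
proof -
  have "Kc (-1) 1 (int (m+n)) (int m) (int n) = of_int (4*(int n)*1) / of_int (4*((int (m+n)+1)*(int m+1))*1)"
    unfolding Kc_def by (simp add: algebra_simps)
  also have "\<dots> = of_int (int n) / of_int ((int (m+n)+1)*(int m+1))"
    by (rule frac4) auto
  also have "\<dots> = of_nat n / ((of_nat (m+n) + 1) * (of_nat m + 1))" by simp
  finally show ?thesis .
qed

lemma K12_1m: "Kc 1 (-1) (int (m+n)) (int m) (int n) = 0"
  unfolding Kc_def by simp

lemma K23_11: "Kc 1 1 (int m) (int n) (int (m+n)) = (of_nat (m+n) + 2) / ((of_nat m + 1) * (of_nat n + 1))"
proof -
  have "Kc 1 1 (int m) (int n) (int (m+n)) = of_int (4*(int (m+n)+2)*1) / of_int (4*((int m+1)*(int n+1))*1)"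
    unfolding Kc_def by (simp add: algebra_simps)
  also have "\<dots> = of_int (int (m+n)+2) / of_int ((int m+1)*(int n+1))"
    by (rule frac4) auto
  also have "\<dots> = (of_nat (m+n) + 2) / ((of_nat m + 1) * (of_nat n + 1))" by simp
  finally show ?thesis .
qed

lemma K23_1m: "Kc 1 (-1) (int m) (int n) (int (m+n)) = of_nat n / (of_nat n + 1)"
proof -
  have "Kc 1 (-1) (int m) (int n) (int (m+n)) = of_int (4*(int n)*(int m+1)) / of_int (4*(int n+1)*(int m+1))"
    unfolding Kc_def by (simp add: algebra_simps)
  also have "\<dots> = of_int (int n) / of_int (int n+1)"
    by (rule frac4) auto
  also have "\<dots> = of_nat n / (of_nat n + 1)" by simp
  finally show ?thesis .
qed

lemma K23_m1: "Kc (-1) 1 (int m) (int n) (int (m+n)) = of_nat m / (of_nat m + 1)"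
proof -
  have "Kc (-1) 1 (int m) (int n) (int (m+n)) = of_int (4*(int m)*(int n+1)) / of_int (4*(int m+1)*(int n+1))"
    unfolding Kc_def by (simp add: algebra_simps)
  also have "\<dots> = of_int (int m) / of_int (int m+1)"
    by (rule frac4) auto
  also have "\<dots> = of_nat m / (of_nat m + 1)" by simp
  finally show ?thesis .
qed

lemma K23_mm: "Kc (-1) (-1) (int m) (int n) (int (m+n)) = 0"
  unfolding Kc_def by simp

lemma K13_11: "Kc 1 1 (int n) (int n) 0 = (of_nat n + 2) / (of_nat n + 1)"
proof -
  have "Kc 1 1 (int n) (int n) 0 = of_int (4*(int n+2)*(int n+1)) / of_int (4*(int n+1)*(int n+1))"
    unfolding Kc_def by (simp add: algebra_simps)
  also have "\<dots> = of_int (int n+2) / of_int (int n+1)"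
    by (rule frac4) auto
  also have "\<dots> = (of_nat n + 2) / (of_nat n + 1)" by simp
  finally show ?thesis .
qed

lemma K13_mm: "Kc (-1) (-1) (int n) (int n) 0 = of_nat n / (of_nat n + 1)"
proof -
  have "Kc (-1) (-1) (int n) (int n) 0 = of_int (4*(int n)*(int n+1)) / of_int (4*(int n+1)*(int n+1))"
    unfolding Kc_def by (simp add: algebra_simps)
  also have "\<dots> = of_int (int n) / of_int (int n+1)"
    by (rule frac4) auto
  also have "\<dots> = of_nat n / (of_nat n + 1)" by simp
  finally show ?thesis .
qed

lemma K13_1m: "Kc 1 (-1) (int n) (int n) 0 = 0"
  unfolding Kc_def by simp

lemma K13_m1: "Kc (-1) 1 (int n) (int n) 0 = 0"
  unfolding Kc_def by simp

lemma phiA_eval: "phiA \<phi> j1 j2 j3 x y z = (if admissible j1 j2 j3 then \<phi> j1 j2 j3 x y z else 0)"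
  unfolding phiA_def by simp

lemma schur_rel:
  assumes "genus2_schur \<phi>" "x \<noteq> 0" "y \<noteq> 0" "admissible j1 j2 j3"
  shows "(x + 1/x) * \<phi> j1 j2 j3 x y 1 =
          (\<Sum>a\<in>{-1,1}. \<Sum>b\<in>{-1,1}. Kc a b j1 j2 j3 * phiA \<phi> (j1+a) (j2+b) j3 x y 1)"
    and "(y + 1/y) * \<phi> j1 j2 j3 x y 1 =
          (\<Sum>a\<in>{-1,1}. \<Sum>b\<in>{-1,1}. Kc a b j1 j3 j2 * phiA \<phi> (j1+a) j2 (j3+b) x y 1)"
    and "2 * \<phi> j1 j2 j3 x y 1 =
          (\<Sum>a\<in>{-1,1}. \<Sum>b\<in>{-1,1}. Kc a b j2 j3 j1 * phiA \<phi> j1 (j2+a) (j3+b) x y 1)"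
proof -
  have ALL: "\<forall>j1 j2 j3 x y z. admissible j1 j2 j3 \<longrightarrow> x \<noteq> 0 \<longrightarrow> y \<noteq> 0 \<longrightarrow> z \<noteq> 0 \<longrightarrow>
        (x + 1/x) * \<phi> j1 j2 j3 x y z =
          (\<Sum>a\<in>{-1,1}. \<Sum>b\<in>{-1,1}. Kc a b j1 j2 j3 * phiA \<phi> (j1+a) (j2+b) j3 x y z) \<and>
        (y + 1/y) * \<phi> j1 j2 j3 x y z =
          (\<Sum>a\<in>{-1,1}. \<Sum>b\<in>{-1,1}. Kc a b j1 j3 j2 * phiA \<phi> (j1+a) j2 (j3+b) x y z) \<and>
        (z + 1/z) * \<phi> j1 j2 j3 x y z =
          (\<Sum>a\<in>{-1,1}. \<Sum>b\<in>{-1,1}. Kc a b j2 j3 j1 * phiA \<phi> j1 (j2+a) (j3+b) x y z)"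
    using assms(1) unfolding genus2_schur_def by blast
  have H: "(x + 1/x) * \<phi> j1 j2 j3 x y 1 =
          (\<Sum>a\<in>{-1,1}. \<Sum>b\<in>{-1,1}. Kc a b j1 j2 j3 * phiA \<phi> (j1+a) (j2+b) j3 x y 1) \<and>
        (y + 1/y) * \<phi> j1 j2 j3 x y 1 =
          (\<Sum>a\<in>{-1,1}. \<Sum>b\<in>{-1,1}. Kc a b j1 j3 j2 * phiA \<phi> (j1+a) j2 (j3+b) x y 1) \<and>
        (1 + 1/1) * \<phi> j1 j2 j3 x y 1 =
          (\<Sum>a\<in>{-1,1}. \<Sum>b\<in>{-1,1}. Kc a b j2 j3 j1 * phiA \<phi> j1 (j2+a) (j3+b) x y 1)"
    by (rule ALL[rule_format, OF assms(4) assms(2) assms(3) one_neq_zero])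
  then show "(x + 1/x) * \<phi> j1 j2 j3 x y 1 =
          (\<Sum>a\<in>{-1,1}. \<Sum>b\<in>{-1,1}. Kc a b j1 j2 j3 * phiA \<phi> (j1+a) (j2+b) j3 x y 1)"
    and "(y + 1/y) * \<phi> j1 j2 j3 x y 1 =
          (\<Sum>a\<in>{-1,1}. \<Sum>b\<in>{-1,1}. Kc a b j1 j3 j2 * phiA \<phi> (j1+a) j2 (j3+b) x y 1)"
    by auto
  from H show "2 * \<phi> j1 j2 j3 x y 1 =
          (\<Sum>a\<in>{-1,1}. \<Sum>b\<in>{-1,1}. Kc a b j2 j3 j1 * phiA \<phi> j1 (j2+a) (j3+b) x y 1)"
    by (simp only: one_add_one div_by_1)
qed

lemma schur_base:
  assumes "genus2_schur \<phi>" "x \<noteq> 0" "y \<noteq> 0"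
  shows "\<phi> 0 0 0 x y 1 = 1"
  using assms unfolding genus2_schur_def by simp

lemma rel12_face:
  assumes S: "genus2_schur \<phi>" and xy: "x \<noteq> 0" "y \<noteq> 0"
  shows "(x + 1/x) * \<phi> (int (m+n)) (int m) (int n) x y 1 =
     (of_nat (m+n) + 2) / (of_nat (m+n) + 1) * \<phi> (int (m+1+n)) (int (m+1)) (int n) x y 1
   + of_nat m / (of_nat m + 1) * \<phi> (int (m-1+n)) (int (m-1)) (int n) x y 1
   + of_nat n / ((of_nat (m+n) + 1) * (of_nat m + 1)) * \<phi> (int (m+n) - 1) (int m + 1) (int n) x y 1"
proof -
  have E: "(x + 1/x) * \<phi> (int (m+n)) (int m) (int n) x y 1 =
      (\<Sum>a\<in>{-1,1}. \<Sum>b\<in>{-1,1}. Kc a b (int (m+n)) (int m) (int n) * phiA \<phi> (int (m+n)+a) (int m+b) (int n) x y 1)"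
    by (rule schur_rel(1)[OF S xy adm_face])
  have t1: "Kc (-1) (-1) (int (m+n)) (int m) (int n) * phiA \<phi> (int (m+n) + -1) (int m + -1) (int n) x y 1
      = of_nat m / (of_nat m + 1) * \<phi> (int (m-1+n)) (int (m-1)) (int n) x y 1"
  proof (cases m)
    case 0
    then show ?thesis unfolding K12_mm by simp
  next
    case (Suc k)
    then have e: "int (m+n) + -1 = int (m-1+n)" "int m + -1 = int (m-1)" by auto
    show ?thesis unfolding K12_mm e phiA_eval using adm_face[of "m-1" n] by simp
  qed
  have t2: "Kc (-1) 1 (int (m+n)) (int m) (int n) * phiA \<phi> (int (m+n) + -1) (int m + 1) (int n) x y 1
      = of_nat n / ((of_nat (m+n) + 1) * (of_nat m + 1)) * \<phi> (int (m+n) - 1) (int m + 1) (int n) x y 1"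
  proof (cases "n = 0")
    case True
    then show ?thesis unfolding K12_m1 by simp
  next
    case False
    have "admissible (int (m+n) + -1) (int m + 1) (int n)"
      unfolding admissible_def using False by (auto; presburger)
    then show ?thesis unfolding K12_m1 phiA_eval by simp
  qed
  have t3: "Kc 1 (-1) (int (m+n)) (int m) (int n) * phiA \<phi> (int (m+n) + 1) (int m + -1) (int n) x y 1 = 0"
    unfolding K12_1m by simp
  have t4: "Kc 1 1 (int (m+n)) (int m) (int n) * phiA \<phi> (int (m+n) + 1) (int m + 1) (int n) x y 1
      = (of_nat (m+n) + 2) / (of_nat (m+n) + 1) * \<phi> (int (m+1+n)) (int (m+1)) (int n) x y 1"
  proof -
    have e: "int (m+n) + 1 = int (m+1+n)" "int m + 1 = int (m+1)" by auto
    show ?thesis unfolding K12_11 e phiA_eval using adm_face[of "m+1" n] by simp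
  qed
  show ?thesis using E unfolding sum_pm t1 t2 t3 t4 by (simp add: algebra_simps)
qed

lemma rel23_face:
  assumes S: "genus2_schur \<phi>" and xy: "x \<noteq> 0" "y \<noteq> 0"
  shows "2 * \<phi> (int (m+n)) (int m) (int n) x y 1 =
     (of_nat (m+n) + 2) / ((of_nat m + 1) * (of_nat n + 1)) * \<phi> (int (m+n)) (int m + 1) (int n + 1) x y 1
   + of_nat n / (of_nat n + 1) * \<phi> (int (m+1+(n-1))) (int (m+1)) (int (n-1)) x y 1
   + of_nat m / (of_nat m + 1) * \<phi> (int (m-1+(n+1))) (int (m-1)) (int (n+1)) x y 1"
proof -
  have E: "2 * \<phi> (int (m+n)) (int m) (int n) x y 1 =
      (\<Sum>a\<in>{-1,1}. \<Sum>b\<in>{-1,1}. Kc a b (int m) (int n) (int (m+n)) * phiA \<phi> (int (m+n)) (int m+a) (int n+b) x y 1)"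
    by (rule schur_rel(3)[OF S xy adm_face])
  have t1: "Kc (-1) (-1) (int m) (int n) (int (m+n)) * phiA \<phi> (int (m+n)) (int m + -1) (int n + -1) x y 1 = 0"
    unfolding K23_mm by simp
  have t2: "Kc (-1) 1 (int m) (int n) (int (m+n)) * phiA \<phi> (int (m+n)) (int m + -1) (int n + 1) x y 1
      = of_nat m / (of_nat m + 1) * \<phi> (int (m-1+(n+1))) (int (m-1)) (int (n+1)) x y 1"
  proof (cases m)
    case 0
    then show ?thesis unfolding K23_m1 by simp
  next
    case (Suc k)
    then have e: "int (m+n) = int (m-1+(n+1))" "int m + -1 = int (m-1)" "int n + 1 = int (n+1)" by auto
    show ?thesis unfolding K23_m1 unfolding e phiA_eval using adm_face[of "m-1" "n+1"] by simp
  qed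
  have t3: "Kc 1 (-1) (int m) (int n) (int (m+n)) * phiA \<phi> (int (m+n)) (int m + 1) (int n + -1) x y 1
      = of_nat n / (of_nat n + 1) * \<phi> (int (m+1+(n-1))) (int (m+1)) (int (n-1)) x y 1"
  proof (cases n)
    case 0
    then show ?thesis unfolding K23_1m by simp
  next
    case (Suc k)
    then have e: "int (m+n) = int (m+1+(n-1))" "int m + 1 = int (m+1)" "int n + -1 = int (n-1)" by auto
    show ?thesis unfolding K23_1m unfolding e phiA_eval using adm_face[of "m+1" "n-1"] by simp
  qed
  have t4: "Kc 1 1 (int m) (int n) (int (m+n)) * phiA \<phi> (int (m+n)) (int m + 1) (int n + 1) x y 1
      = (of_nat (m+n) + 2) / ((of_nat m + 1) * (of_nat n + 1)) * \<phi> (int (m+n)) (int m + 1) (int n + 1) x y 1"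
  proof -
    have "admissible (int (m+n)) (int m + 1) (int n + 1)"
      unfolding admissible_def by (auto; presburger)
    then show ?thesis unfolding K23_11 phiA_eval by simp
  qed
  show ?thesis using E unfolding sum_pm t1 t2 t3 t4 by (simp add: algebra_simps)
qed

lemma rel13_face:
  assumes S: "genus2_schur \<phi>" and xy: "x \<noteq> 0" "y \<noteq> 0"
  shows "(y + 1/y) * \<phi> (int n) 0 (int n) x y 1 =
     (of_nat n + 2) / (of_nat n + 1) * \<phi> (int (n+1)) 0 (int (n+1)) x y 1
   + of_nat n / (of_nat n + 1) * \<phi> (int (n-1)) 0 (int (n-1)) x y 1"
proof -
  have adm: "admissible (int n) 0 (int n)" using adm_face[of 0 n] by simp
  have E: "(y + 1/y) * \<phi> (int n) 0 (int n) x y 1 =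
      (\<Sum>a\<in>{-1,1}. \<Sum>b\<in>{-1,1}. Kc a b (int n) (int n) 0 * phiA \<phi> (int n+a) 0 (int n+b) x y 1)"
    by (rule schur_rel(2)[OF S xy adm])
  have t1: "Kc (-1) (-1) (int n) (int n) 0 * phiA \<phi> (int n + -1) 0 (int n + -1) x y 1
      = of_nat n / (of_nat n + 1) * \<phi> (int (n-1)) 0 (int (n-1)) x y 1"
  proof (cases n)
    case 0
    then show ?thesis unfolding K13_mm by simp
  next
    case (Suc k)
    then have e: "int n + -1 = int (n-1)" by auto
    show ?thesis unfolding K13_mm e phiA_eval using adm_face[of 0 "n-1"] by simp
  qed
  have t2: "Kc (-1) 1 (int n) (int n) 0 * phiA \<phi> (int n + -1) 0 (int n + 1) x y 1 = 0"
    unfolding K13_m1 by simp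
  have t3: "Kc 1 (-1) (int n) (int n) 0 * phiA \<phi> (int n + 1) 0 (int n + -1) x y 1 = 0"
    unfolding K13_1m by simp
  have t4: "Kc 1 1 (int n) (int n) 0 * phiA \<phi> (int n + 1) 0 (int n + 1) x y 1
      = (of_nat n + 2) / (of_nat n + 1) * \<phi> (int (n+1)) 0 (int (n+1)) x y 1"
  proof -
    have e: "int n + 1 = int (n+1)" by auto
    show ?thesis unfolding K13_11 e phiA_eval using adm_face[of 0 "n+1"] by simp
  qed
  show ?thesis using E unfolding sum_pm t1 t2 t3 t4 by (simp add: algebra_simps)
qed



lemma alg_step:
  fixes a b c X F Gc Gp Gm Gn Gq I :: complex
  assumes a1: "a + 1 \<noteq> 0" and b0: "b \<noteq> 0" and c0: "c \<noteq> 0" and c1: "c + 1 \<noteq> 0" and cab: "c = a + b + 1"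
    and E1: "X * Gc = (c+1)/c * F + a/(a+1) * Gm + b/(c*(a+1)) * I"
    and E2: "2 * Gn = c/((a+1)*b) * I + (b-1)/b * Gq + a/(a+1) * Gm"
    and GR: "(c+1)*c*Gp = c^2 * (X*Gc) - (c+b)*(a*Gm) - 2*b*(b*Gn) + b*(b-1)*Gq"
  shows "F = Gp"
proof -
  have E1': "c*(a+1)*(X*Gc) = (c+1)*(a+1)*F + c*a*Gm + b*I"
  proof -
    have "c*(a+1)*(X*Gc) = c*(a+1)*((c+1)/c * F + a/(a+1) * Gm + b/(c*(a+1)) * I)" using E1 by simp
    also have "\<dots> = c*(a+1)*((c+1)/c * F) + c*(a+1)*(a/(a+1) * Gm) + c*(a+1)*(b/(c*(a+1)) * I)"
      by (simp only: distrib_left)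
    also have "c*(a+1)*((c+1)/c * F) = (c+1)*(a+1)*F" using c0 by (simp add: field_simps)
    also have "c*(a+1)*(a/(a+1) * Gm) = c*a*Gm" using a1 by (simp add: field_simps)
    also have "c*(a+1)*(b/(c*(a+1)) * I) = b*I"
    proof -
      have cz: "c*(a+1) \<noteq> 0" using a1 c0 by simp
      have "c*(a+1)*(b/(c*(a+1)) * I) = ((c*(a+1))*b/(c*(a+1)))*I" by (metis mult.assoc times_divide_eq_right)
      also have "(c*(a+1))*b/(c*(a+1)) = b" by (rule nonzero_mult_div_cancel_left[OF cz])
      finally show ?thesis .
    qed
    finally show ?thesis .
  qed
  have E2': "(a+1)*b*(2*Gn) = c*I + (a+1)*(b-1)*Gq + a*b*Gm"
  proof -
    have "(a+1)*b*(2*Gn) = (a+1)*b*(c/((a+1)*b) * I + (b-1)/b * Gq + a/(a+1) * Gm)" using E2 by simp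
    also have "\<dots> = (a+1)*b*(c/((a+1)*b) * I) + (a+1)*b*((b-1)/b * Gq) + (a+1)*b*(a/(a+1) * Gm)"
      by (simp only: distrib_left)
    also have "(a+1)*b*(c/((a+1)*b) * I) = c*I"
    proof -
      have cz: "(a+1)*b \<noteq> 0" using a1 b0 by simp
      have "(a+1)*b*(c/((a+1)*b) * I) = (((a+1)*b)*c/((a+1)*b))*I" by (metis mult.assoc times_divide_eq_right)
      also have "((a+1)*b)*c/((a+1)*b) = c" by (rule nonzero_mult_div_cancel_left[OF cz])
      finally show ?thesis .
    qed
    also have "(a+1)*b*((b-1)/b * Gq) = (a+1)*(b-1)*Gq" using b0 by (simp add: field_simps)
    also have "(a+1)*b*(a/(a+1) * Gm) = a*b*Gm" using a1 by (simp add: field_simps)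
    finally show ?thesis .
  qed
  have "(a+1)*(c+1)*c*F = (a+1)*(c+1)*c*Gp"
    using E1' E2' GR cab by algebra
  then show ?thesis using a1 c0 c1 by simp
qed

lemma alg_step0:
  fixes a c X F Gc Gp Gm :: complex
  assumes a1: "a + 1 \<noteq> 0" and c0: "c \<noteq> 0" and c1: "c + 1 \<noteq> 0" and cab: "c = a + 1"
    and E1: "X * Gc = (c+1)/c * F + a/(a+1) * Gm"
    and GR: "(c+1)*c*Gp = c^2 * (X*Gc) - c*(a*Gm)"
  shows "F = Gp"
proof -
  have E1': "c*(a+1)*(X*Gc) = (c+1)*(a+1)*F + c*a*Gm"
  proof -
    have "c*(a+1)*(X*Gc) = c*(a+1)*((c+1)/c * F + a/(a+1) * Gm)" using E1 by simp
    also have "\<dots> = c*(a+1)*((c+1)/c * F) + c*(a+1)*(a/(a+1) * Gm)"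
      by (simp only: distrib_left)
    also have "c*(a+1)*((c+1)/c * F) = (c+1)*(a+1)*F" using c0 by (simp add: field_simps)
    also have "c*(a+1)*(a/(a+1) * Gm) = c*a*Gm" using a1 by (simp add: field_simps)
    finally show ?thesis .
  qed
  have "(a+1)*(c+1)*c*F = (a+1)*(c+1)*c*Gp"
    using E1' GR cab by algebra
  then show ?thesis using a1 c0 c1 by simp
qed

theorem mainTheorem14:
  fixes \<phi> :: "int \<Rightarrow> int \<Rightarrow> int \<Rightarrow> complex \<Rightarrow> complex \<Rightarrow> complex \<Rightarrow> complex"
    and j1 j2 :: nat and x y :: complex
  assumes "genus2_schur \<phi>"
    and "j2 \<le> j1"
    and "x \<noteq> 0" and "y \<noteq> 0"
  shows "\<phi> (int j1) (int j2) (int (j1 - j2)) x y 1 =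
    (\<Sum>a=0..j2. \<Sum>b=0..j1-j2. cab j1 j2 a b * (x + 1/x)^(j2 - a) * (y + 1/y)^(j1 - j2 - b))"
proof -
  note S = assms(1) and xy = assms(3,4)
  define X where "X = x + 1/x"
  define Y where "Y = y + 1/y"
  define f where "f m n = \<phi> (int (m+n)) (int m) (int n) x y 1" for m n
  have main: "\<forall>m n. m + n = N \<longrightarrow> f m n = GG m n X Y" for N
  proof (induction N rule: less_induct)
    case (less N)
    have IH: "\<And>m' n'. m'+n' < N \<Longrightarrow> f m' n' = GG m' n' X Y" using less by blast
    show ?case
    proof (intro allI impI)
      fix m n assume mn: "m + n = N"
      show "f m n = GG m n X Y"
      proof (cases m)
        case 0
        show ?thesis
        proof (cases n)
          case 0
          have "f 0 0 = 1" unfolding f_def using schur_base[OF S xy] by simp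
          then show ?thesis using \<open>m = 0\<close> 0 by (simp add: GG_00)
        next
          case (Suc n')
          define e :: complex where "e = of_nat n'"
          have R: "Y * f 0 n' = (e+1+1)/(e+1) * f 0 (n'+1) + e/(e+1) * f 0 (n'-1)"
            using rel13_face[OF S xy, of n'] unfolding f_def Y_def e_def by (simp add: add.assoc)
          have i1: "f 0 n' = GG 0 n' X Y" using IH[of 0 n'] mn \<open>m = 0\<close> Suc by simp
          have i2: "f 0 (n'-1) = GG 0 (n'-1) X Y" using IH[of 0 "n'-1"] mn \<open>m = 0\<close> Suc by simp
          have GR: "(e+1+1)*(e+1)*GG 0 (n'+1) X Y = (e+1)^2 * (Y * GG 0 n' X Y) - (e+1)*(e * GG 0 (n'-1) X Y)"
            using G_rec0[of n' X Y] unfolding e_def by (simp add: algebra_simps)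
          have "f 0 (n'+1) = GG 0 (n'+1) X Y"
            by (rule alg_step0[where a=e and c="e+1" and X=Y and Gc="GG 0 n' X Y" and Gm="GG 0 (n'-1) X Y"])
               (use R GR i1 i2 nz_c in \<open>simp_all add: e_def\<close>)
          then show ?thesis using \<open>m = 0\<close> Suc by simp
        qed
      next
        case (Suc m')
        define a :: complex where "a = of_nat m'"
        define b :: complex where "b = of_nat n"
        define c :: complex where "c = of_nat (m'+n) + 1"
        define I where "I = \<phi> (int (m'+n) - 1) (int m' + 1) (int n) x y 1"
        have cabc: "c = a + b + 1" unfolding a_def b_def c_def by simp
        have a1: "a + 1 \<noteq> 0" unfolding a_def by (rule nz_c1)
        have c0: "c \<noteq> 0" unfolding c_def by (rule nz_c1)
        have c1: "c + 1 \<noteq> 0" unfolding c_def using nz_c2[of "m'+n"] by (simp add: add.assoc)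
        have i0: "f m' n = GG m' n X Y" using IH[of m' n] mn Suc by simp
        have im: "f (m'-1) n = GG (m'-1) n X Y" using IH[of "m'-1" n] mn Suc by simp
        have R12: "X * f m' n = (c+1)/c * f (m'+1) n + a/(a+1) * f (m'-1) n + b/(c*(a+1)) * I"
        proof -
          have "(of_nat (m'+n) + 2 :: complex) = c + 1" unfolding c_def by simp
          moreover have "(of_nat (m'+n) + 1 :: complex) = c" unfolding c_def by simp
          ultimately show ?thesis using rel12_face[OF S xy, of m' n]
            unfolding f_def X_def I_def a_def b_def by (simp add: mult.commute)
        qed
        have GR: "(c+1)*c*GG (m'+1) n X Y = c^2 * (X * GG m' n X Y) - (c+b)*(a*GG (m'-1) n X Y)
             - 2*b*(b*GG m' (n-1) X Y) + of_nat (n*(n-1))*GG (m'+1) (n-2) X Y"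
        proof -
          have "(of_nat ((m'+n+2)*(m'+n+1)) :: complex) = (c+1)*c" unfolding c_def by (simp add: algebra_simps)
          moreover have "(of_nat ((m'+n+1)^2) :: complex) = c^2" unfolding c_def by (simp add: add.commute)
          moreover have "(of_nat (m'+n+n+1) :: complex) = c + b" unfolding c_def b_def by simp
          ultimately show ?thesis using G_rec[of m' n X Y] unfolding a_def b_def by simp
        qed
        have "f (m'+1) n = GG (m'+1) n X Y"
        proof (cases "n = 0")
          case True
          show ?thesis
          proof (rule alg_step0[where a=a and c=c and X=X and Gc="GG m' n X Y" and Gm="GG (m'-1) n X Y"])
            show "a + 1 \<noteq> 0" by (fact a1)
            show "c \<noteq> 0" by (fact c0)
            show "c + 1 \<noteq> 0" by (fact c1)
            show "c = a + 1" using cabc True unfolding b_def by simp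
            show "X * GG m' n X Y = (c + 1) / c * f (m' + 1) n + a / (a + 1) * GG (m' - 1) n X Y"
              using R12 True i0 im unfolding b_def by simp
            show "(c + 1) * c * GG (m' + 1) n X Y = c\<^sup>2 * (X * GG m' n X Y) - c * (a * GG (m' - 1) n X Y)"
              using GR True unfolding b_def by simp
          qed
        next
          case False
          have i1: "f m' (n-1) = GG m' (n-1) X Y" using IH[of m' "n-1"] mn Suc False by simp
          have i2: "f (m'+1) (n-2) = GG (m'+1) (n-2) X Y" using IH[of "m'+1" "n-2"] mn Suc False by simp
          have R23: "2 * f m' (n-1) = c/((a+1)*b) * I + (b-1)/b * f (m'+1) (n-2) + a/(a+1) * f (m'-1) n"
          proof -
            have e1: "(of_nat (m'+(n-1)) + 2 :: complex) = c" unfolding c_def using False by (simp add: of_nat_diff)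
            have e2: "(of_nat (n-1) + 1 :: complex) = b" unfolding b_def using False by (simp add: of_nat_diff)
            have e3: "(of_nat (n-1) :: complex) = b - 1" unfolding b_def using False by (simp add: of_nat_diff)
            have e4: "int (m'+(n-1)) = int (m'+n) - 1" "int (n-1) + 1 = int n" "n - 1 - 1 = n - 2" "n - 1 + 1 = n"
              using False by auto
            have e5: "(of_nat m' :: complex) = a" unfolding a_def by simp
            have "2 * \<phi> (int (m'+(n-1))) (int m') (int (n-1)) x y 1 =
               (of_nat (m'+(n-1)) + 2) / ((of_nat m' + 1) * (of_nat (n-1) + 1)) * \<phi> (int (m'+(n-1))) (int m' + 1) (int (n-1) + 1) x y 1
             + of_nat (n-1) / (of_nat (n-1) + 1) * \<phi> (int (m'+1+(n-1-1))) (int (m'+1)) (int (n-1-1)) x y 1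
             + of_nat m' / (of_nat m' + 1) * \<phi> (int (m'-1+(n-1+1))) (int (m'-1)) (int (n-1+1)) x y 1"
              by (rule rel23_face[OF S xy])
            then show ?thesis unfolding e1 e2 e3 e5 e4 f_def I_def by simp
          qed
          have bz: "b \<noteq> 0" unfolding b_def using False by simp
          have bb: "(of_nat (n*(n-1)) :: complex) = b*(b-1)" unfolding b_def using False by (simp add: of_nat_diff)
          show ?thesis
          proof (rule alg_step[where a=a and b=b and c=c and X=X and I=I and Gc="GG m' n X Y"
                  and Gm="GG (m'-1) n X Y" and Gn="GG m' (n-1) X Y" and Gq="GG (m'+1) (n-2) X Y"])
            show "a + 1 \<noteq> 0" by (fact a1)
            show "b \<noteq> 0" by (fact bz)
            show "c \<noteq> 0" by (fact c0)
            show "c + 1 \<noteq> 0" by (fact c1)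
            show "c = a + b + 1" by (fact cabc)
            show "X * GG m' n X Y = (c + 1) / c * f (m' + 1) n + a / (a + 1) * GG (m' - 1) n X Y + b / (c * (a + 1)) * I"
              using R12 i0 im by simp
            show "2 * GG m' (n - 1) X Y = c / ((a + 1) * b) * I + (b - 1) / b * GG (m' + 1) (n - 2) X Y + a / (a + 1) * GG (m' - 1) n X Y"
              using R23 i1 i2 im by simp
            show "(c + 1) * c * GG (m' + 1) n X Y = c\<^sup>2 * (X * GG m' n X Y) - (c + b) * (a * GG (m' - 1) n X Y) -
                2 * b * (b * GG m' (n - 1) X Y) + b * (b - 1) * GG (m' + 1) (n - 2) X Y"
              using GR unfolding bb .
          qed
        qed
        then show ?thesis using Suc by simp
      qed
    qed
  qed
  have "\<phi> (int j1) (int j2) (int (j1 - j2)) x y 1 = f j2 (j1 - j2)"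
    unfolding f_def using assms(2) by simp
  also have "\<dots> = GG j2 (j1 - j2) X Y" using main by blast
  also have "\<dots> = (\<Sum>a=0..j2. \<Sum>b=0..j1-j2. cab j1 j2 a b * (x + 1/x)^(j2 - a) * (y + 1/y)^(j1 - j2 - b))"
    unfolding GG_def BX_def D_def X_def Y_def using assms(2) by simp
  finally show ?thesis .
qed


end
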